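(* For every integer $k \geq 1$ there is a graph $G$ of tree-width $k$ with $\operatorname{pn}_u(G) \geq \operatorname{pn}_\ell(G) \geq k$.
   Context: All graphs are finite and simple. A linear embedding of a graph $G=(V,E)$ is a pair $(\prec,\mathcal{P})$ where $\prec$ is a total ordering of $V$ and $\mathcal{P}$ is a partition of $E$ into parts called pages. Two edges $uv, xy$ with $u\prec v$, $x \prec y$ cross if $u \prec x \prec v \prec y$ or $x \prec u \prec y \prec v$. A book embedding is a linear embedding in which no two crossing edges lie on the same page. For a book embedding and a vertex $v$, let $\mathcal{P}_v$ be the set of pages containing at least one edge incident to $v$; the embedding is $k$-local if $|\mathcal{P}_v| \le k$ for all $v$, and the local page number $\operatorname{pn}_\ell(G)$ is the smallest $k$ such that $G$ admits a $k$-local book embedding (with any number of pages). For a linear embedding and a page $P$, let $G_P$ be the subgraph consisting of the edges of $P$ and all vertices incident to an edge of $P$. A union embedding is a linear embedding such that for every page $P$ and every connected component $C$ of $G_P$, no two edges of $C$ cross. The union page number $\operatorname{pn}_u(G)$ is the smallest number of pages of a union embedding of $G$. *)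

theory Defs
  imports Main
begin

definition simple_graph :: "'a set \<Rightarrow> 'a set set \<Rightarrow> bool" where
  "simple_graph V E \<longleftrightarrow> finite V \<and> (\<forall>e\<in>E. e \<subseteq> V \<and> card e = 2)"

definition reach :: "'a set \<Rightarrow> 'a set set \<Rightarrow> 'a \<Rightarrow> 'a \<Rightarrow> bool" where
  "reach V E u w \<longleftrightarrow> u \<in> V \<and> w \<in> V \<and>
     (\<lambda>x y. x \<in> V \<and> y \<in> V \<and> {x, y} \<in> E)\<^sup>*\<^sup>* u w"

definition connected_graph :: "'a set \<Rightarrow> 'a set set \<Rightarrow> bool" where
  "connected_graph V E \<longleftrightarrow> V \<noteq> {} \<and> (\<forall>u\<in>V. \<forall>w\<in>V. reach V E u w)"

definition has_cycle :: "'a set \<Rightarrow> 'a set set \<Rightarrow> bool" where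
  "has_cycle V E \<longleftrightarrow> (\<exists>cs. length cs \<ge> 3 \<and> distinct cs \<and> set cs \<subseteq> V \<and>
     (\<forall>i. Suc i < length cs \<longrightarrow> {cs ! i, cs ! Suc i} \<in> E) \<and>
     {last cs, hd cs} \<in> E)"

definition is_tree :: "'a set \<Rightarrow> 'a set set \<Rightarrow> bool" where
  "is_tree V E \<longleftrightarrow> simple_graph V E \<and> connected_graph V E \<and> \<not> has_cycle V E"

definition tree_decomposition ::
  "'a set \<Rightarrow> 'a set set \<Rightarrow> nat set \<Rightarrow> nat set set \<Rightarrow> (nat \<Rightarrow> 'a set) \<Rightarrow> bool" where
  "tree_decomposition V E N F B \<longleftrightarrow>
     is_tree N F \<and>
     (\<Union>t\<in>N. B t) = V \<and>
     (\<forall>e\<in>E. \<exists>t\<in>N. e \<subseteq> B t) \<and>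
     (\<forall>v\<in>V. connected_graph {t\<in>N. v \<in> B t} {f\<in>F. f \<subseteq> {t\<in>N. v \<in> B t}})"

definition treewidth :: "'a set \<Rightarrow> 'a set set \<Rightarrow> nat" where
  "treewidth V E = (LEAST w. \<exists>N F B. tree_decomposition V E N F B \<and>
                                     (\<forall>t\<in>N. card (B t) \<le> w + 1))"

text \<open>The vertex ordering is given by a list vs enumerating V without repetition:
  u precedes w iff u occurs before w in vs. The page partition is given by a
  page-assignment p of the edges; the pages are the nonempty fibres of p on E.\<close>
definition prec :: "'a list \<Rightarrow> 'a \<Rightarrow> 'a \<Rightarrow> bool" where
  "prec vs u w \<longleftrightarrow> (\<exists>i j. i < j \<and> j < length vs \<and> vs ! i = u \<and> vs ! j = w)"

definition linear_embedding :: "'a set \<Rightarrow> 'a set set \<Rightarrow> 'a list \<Rightarrow> ('a set \<Rightarrow> nat) \<Rightarrow> bool" where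
  "linear_embedding V E vs p \<longleftrightarrow> distinct vs \<and> set vs = V"

definition crosses :: "'a list \<Rightarrow> 'a set \<Rightarrow> 'a set \<Rightarrow> bool" where
  "crosses vs e f \<longleftrightarrow> (\<exists>u v x y. e = {u, v} \<and> f = {x, y} \<and>
       prec vs u v \<and> prec vs x y \<and>
       ((prec vs u x \<and> prec vs x v \<and> prec vs v y) \<or>
        (prec vs x u \<and> prec vs u y \<and> prec vs y v)))"

definition book_embedding :: "'a set \<Rightarrow> 'a set set \<Rightarrow> 'a list \<Rightarrow> ('a set \<Rightarrow> nat) \<Rightarrow> bool" where
  "book_embedding V E vs p \<longleftrightarrow> linear_embedding V E vs p \<and>
     (\<forall>e\<in>E. \<forall>f\<in>E. p e = p f \<longrightarrow> \<not> crosses vs e f)"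

definition pages_at :: "'a set set \<Rightarrow> ('a set \<Rightarrow> nat) \<Rightarrow> 'a \<Rightarrow> nat set" where
  "pages_at E p v = p ` {e\<in>E. v \<in> e}"

definition k_local :: "nat \<Rightarrow> 'a set \<Rightarrow> 'a set set \<Rightarrow> ('a set \<Rightarrow> nat) \<Rightarrow> bool" where
  "k_local k V E p \<longleftrightarrow> (\<forall>v\<in>V. card (pages_at E p v) \<le> k)"

definition local_page_number :: "'a set \<Rightarrow> 'a set set \<Rightarrow> nat" where
  "local_page_number V E = (LEAST k. \<exists>vs p. book_embedding V E vs p \<and> k_local k V E p)"

definition page_edges :: "'a set set \<Rightarrow> ('a set \<Rightarrow> nat) \<Rightarrow> nat \<Rightarrow> 'a set set" where
  "page_edges E p i = {e\<in>E. p e = i}"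

definition page_vertices :: "'a set set \<Rightarrow> ('a set \<Rightarrow> nat) \<Rightarrow> nat \<Rightarrow> 'a set" where
  "page_vertices E p i = \<Union>(page_edges E p i)"

definition same_component :: "'a set set \<Rightarrow> ('a set \<Rightarrow> nat) \<Rightarrow> nat \<Rightarrow> 'a set \<Rightarrow> 'a set \<Rightarrow> bool" where
  "same_component E p i e f \<longleftrightarrow> e \<in> page_edges E p i \<and> f \<in> page_edges E p i \<and>
     (\<exists>u\<in>e. \<exists>w\<in>f. reach (page_vertices E p i) (page_edges E p i) u w)"

definition union_embedding :: "'a set \<Rightarrow> 'a set set \<Rightarrow> 'a list \<Rightarrow> ('a set \<Rightarrow> nat) \<Rightarrow> bool" where
  "union_embedding V E vs p \<longleftrightarrow> linear_embedding V E vs p \<and>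
     (\<forall>i. \<forall>e f. same_component E p i e f \<longrightarrow> \<not> crosses vs e f)"

definition num_pages :: "'a set set \<Rightarrow> ('a set \<Rightarrow> nat) \<Rightarrow> nat" where
  "num_pages E p = card (p ` E)"

definition union_page_number :: "'a set \<Rightarrow> 'a set set \<Rightarrow> nat" where
  "union_page_number V E = (LEAST k. \<exists>vs p. union_embedding V E vs p \<and> num_pages E p = k)"

end

theory Submission imports Defs "HOL-Library.FuncSet" begin

lemma rtranclp_first_step: "r\<^sup>*\<^sup>* a b \<Longrightarrow> a \<noteq> b \<Longrightarrow> \<exists>c. r a c"
  by (induction rule: converse_rtranclp_induct) auto

lemma prec_trans:
  assumes "distinct vs" "prec vs u v" "prec vs v w" shows "prec vs u w"
proof -
  from assms(2) obtain i j where ij: "i < j" "j < length vs" "vs ! i = u" "vs ! j = v"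
    unfolding prec_def by blast
  from assms(3) obtain i' j' where ij': "i' < j'" "j' < length vs" "vs ! i' = v" "vs ! j' = w"
    unfolding prec_def by blast
  have "j = i'" using ij ij' assms(1) nth_eq_iff_index_eq by fastforce
  then show ?thesis unfolding prec_def using ij ij' by (metis order.strict_trans)
qed

lemma prec_irrefl:
  assumes "distinct vs" shows "\<not> prec vs u u"
  using assms unfolding prec_def by (metis nat_neq_iff nth_eq_iff_index_eq order.strict_trans)

lemma prec_asym:
  assumes "distinct vs" "prec vs u w" shows "\<not> prec vs w u"
  using assms prec_trans prec_irrefl by metis

lemma prec_total:
  assumes "u \<in> set vs" "w \<in> set vs" "u \<noteq> w" shows "prec vs u w \<or> prec vs w u"
proof -
  obtain i where i: "i < length vs" "vs ! i = u" using assms(1) by (meson in_set_conv_nth)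
  obtain j where j: "j < length vs" "vs ! j = w" using assms(2) by (meson in_set_conv_nth)
  have "i \<noteq> j" using i j assms(3) by auto
  then show ?thesis unfolding prec_def using i j by (metis nat_neq_iff)
qed

lemma prec_set: "prec vs u w \<Longrightarrow> u \<in> set vs \<and> w \<in> set vs"
  unfolding prec_def by auto

lemma cross_intro:
  assumes "distinct vs" "prec vs u x" "prec vs x v" "prec vs v y"
  shows "crosses vs {u, v} {x, y}"
proof -
  have "prec vs u v" using assms prec_trans by metis
  moreover have "prec vs x y" using assms prec_trans by metis
  ultimately show ?thesis unfolding crosses_def using assms
    by (intro exI[of _ u] exI[of _ v] exI[of _ x] exI[of _ y]) simp
qed

lemma not_cross_self:
  assumes "distinct vs" shows "\<not> crosses vs e e"
proof
  assume "crosses vs e e"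
  then obtain u v x y where "e = {u, v}" "e = {x, y}" "prec vs u v" "prec vs x y"
       "(prec vs u x \<and> prec vs x v \<and> prec vs v y) \<or> (prec vs x u \<and> prec vs u y \<and> prec vs y v)"
    unfolding crosses_def by blast
  then show False using assms prec_irrefl prec_asym
    by (metis doubleton_eq_iff)
qed


lemma reach_sym:
  assumes "reach V E u w" shows "reach V E w u"
proof -
  let ?R = "\<lambda>x y. x \<in> V \<and> y \<in> V \<and> {x, y} \<in> E"
  have "?R\<^sup>*\<^sup>* u w" using assms unfolding reach_def by blast
  then have "?R\<^sup>*\<^sup>* w u"
  proof (induction rule: rtranclp_induct)
    case base then show ?case by simp
  next
    case (step y z)
    have "?R z y" using step(2) by (simp add: insert_commute)
    then show ?case using step(3) by (rule converse_rtranclp_into_rtranclp)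
  qed
  then show ?thesis using assms unfolding reach_def by blast
qed

lemma reach_trans:
  assumes "reach V E u v" "reach V E v w" shows "reach V E u w"
  using assms unfolding reach_def by (meson rtranclp_trans)

lemma reach_edge:
  assumes "x \<in> V" "y \<in> V" "{x, y} \<in> E" shows "reach V E x y"
  using assms unfolding reach_def by auto

lemma reach_refl:
  assumes "x \<in> V" shows "reach V E x x"
  using assms unfolding reach_def by auto

lemma sc_page:
  "same_component E p i e f \<Longrightarrow> p e = i \<and> p f = i \<and> e \<in> E \<and> f \<in> E"
  unfolding same_component_def page_edges_def by auto

lemma sc_sym:
  "same_component E p i e f \<Longrightarrow> same_component E p i f e"
proof -
  assume a: "same_component E p i e f"
  then obtain u w where "u \<in> e" "w \<in> f" "reach (page_vertices E p i) (page_edges E p i) u w"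
    unfolding same_component_def by blast
  then show ?thesis using a reach_sym unfolding same_component_def by meson
qed

lemma sc_refl:
  assumes "simple_graph V E" "e \<in> E" shows "same_component E p (p e) e e"
proof -
  have "card e = 2" using assms unfolding simple_graph_def by auto
  then obtain a b where e: "e = {a, b}" by (meson card_2_iff)
  have "a \<in> page_vertices E p (p e)" using assms e
    unfolding page_vertices_def page_edges_def by auto
  then have r: "reach (page_vertices E p (p e)) (page_edges E p (p e)) a a" by (rule reach_refl)
  have ep: "e \<in> page_edges E p (p e)" unfolding page_edges_def using assms by simp
  have ae: "a \<in> e" using e by simp
  show ?thesis unfolding same_component_def using ep ae r by blast
qed

lemma sc_trans:
  assumes "simple_graph V E" "same_component E p i e f" "same_component E p i f g"
  shows "same_component E p i e g"
proof -
  obtain u w1 where 1: "u \<in> e" "w1 \<in> f" "reach (page_vertices E p i) (page_edges E p i) u w1"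
    using assms(2) unfolding same_component_def by blast
  obtain u2 w where 2: "u2 \<in> f" "w \<in> g" "reach (page_vertices E p i) (page_edges E p i) u2 w"
    using assms(3) unfolding same_component_def by blast
  have fP: "f \<in> page_edges E p i" using assms(2) unfolding same_component_def by blast
  then have fE: "f \<in> E" unfolding page_edges_def by auto
  have "card f = 2" using assms(1) fE unfolding simple_graph_def by auto
  then obtain a b where fab: "f = {a, b}" by (meson card_2_iff)
  have fV: "f \<subseteq> page_vertices E p i" using fP unfolding page_vertices_def by auto
  have "reach (page_vertices E p i) (page_edges E p i) w1 u2"
  proof (cases "w1 = u2")
    case True then show ?thesis using 1 fV reach_refl by (metis subsetD)
  next
    case False
    then have "{w1, u2} = f" using 1 2 fab by auto
    then show ?thesis using fP fV 1 2 reach_edge by (metis subsetD)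
  qed
  then show ?thesis using 1 2 assms(2,3) reach_trans unfolding same_component_def by meson
qed

lemma union_to_local:
  assumes sg: "simple_graph V E" and ue: "union_embedding V E vs p"
  shows "\<exists>p'. book_embedding V E vs p' \<and> k_local (num_pages E p) V E p'"
proof -
  have finE: "finite E" using sg unfolding simple_graph_def
    by (meson Pow_iff finite_Pow_iff rev_finite_subset subsetI)
  obtain es where es: "set es = E" "distinct es" using finite_distinct_list[OF finE] by blast
  define P where "P = (\<lambda>e j. j < length es \<and> same_component E p (p e) e (es ! j))"
  define p' where "p' = (\<lambda>e. LEAST j. P e j)"
  have exP: "\<exists>j. P e j" if "e \<in> E" for e
  proof -
    have "e \<in> set es" using that es by simp
    then obtain j where j: "j < length es" "es ! j = e" by (auto simp: in_set_conv_nth)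
    have "same_component E p (p e) e e" using sc_refl[OF sg that] .
    then have "P e j" unfolding P_def using j by simp
    then show ?thesis by blast
  qed
  have eq1: "p' e = p' f" if "e \<in> E" "f \<in> E" "same_component E p (p e) e f" for e f
  proof -
    have pe: "p f = p e" using sc_page[OF that(3)] by simp
    have "P e = P f" unfolding P_def
      using that pe sc_sym sc_trans[OF sg] by (metis)
    then show ?thesis unfolding p'_def by simp
  qed
  have eq2: "same_component E p (p e) e f" if "e \<in> E" "f \<in> E" "p' e = p' f" for e f
  proof -
    have "P e (p' e)" "P f (p' f)" unfolding p'_def using exP that(1,2) by (auto intro: LeastI_ex)
    then have a: "same_component E p (p e) e (es ! p' e)" "same_component E p (p f) f (es ! p' e)"
      unfolding P_def using that(3) by auto
    have "p f = p e" using sc_page[OF a(1)] sc_page[OF a(2)] by simp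
    then show ?thesis using a sc_sym sc_trans[OF sg] by metis
  qed
  have book: "book_embedding V E vs p'"
    unfolding book_embedding_def
  proof (intro conjI ballI impI)
    show "linear_embedding V E vs p'" using ue unfolding union_embedding_def linear_embedding_def by auto
    fix e f assume "e \<in> E" "f \<in> E" "p' e = p' f"
    then show "\<not> crosses vs e f" using eq2 ue unfolding union_embedding_def by blast
  qed
  have "card (pages_at E p' v) \<le> num_pages E p" if "v \<in> V" for v
  proof -
    let ?Ev = "{e\<in>E. v \<in> e}"
    define g where "g = (\<lambda>i. p' (SOME e. e \<in> ?Ev \<and> p e = i))"
    have "p' e = g (p e)" if "e \<in> ?Ev" for e
    proof -
      define f where "f = (SOME f. f \<in> ?Ev \<and> p f = p e)"
      have ex: "\<exists>f. f \<in> ?Ev \<and> p f = p e" using that by blast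
      have f0: "f \<in> ?Ev \<and> p f = p e" unfolding f_def by (rule someI_ex[OF ex])
      then have f: "f \<in> ?Ev" "p f = p e" by auto
      have "v \<in> page_vertices E p (p e)" using that unfolding page_vertices_def page_edges_def by auto
      then have rv: "reach (page_vertices E p (p e)) (page_edges E p (p e)) v v" by (rule reach_refl)
      have ep: "e \<in> page_edges E p (p e)" "f \<in> page_edges E p (p e)"
        using that f unfolding page_edges_def by auto
      have ve: "v \<in> e" "v \<in> f" using that f by auto
      have "same_component E p (p e) e f" unfolding same_component_def
        using ep ve rv by blast
      then have "p' e = p' f" using eq1 that f by auto
      then show ?thesis unfolding g_def f_def by simp
    qed
    then have "pages_at E p' v = g ` (p ` ?Ev)" unfolding pages_at_def by (auto simp: image_image)
    then have "card (pages_at E p' v) \<le> card (p ` ?Ev)" by (simp add: card_image_le finE)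
    also have "\<dots> \<le> card (p ` E)" by (intro card_mono) (auto simp: finE)
    finally show ?thesis unfolding num_pages_def .
  qed
  then show ?thesis using book unfolding k_local_def by blast
qed


lemma edge_card2:
  assumes "simple_graph V E" "{x, y} \<in> E" shows "x \<noteq> y" "x \<in> V" "y \<in> V"
  using assms unfolding simple_graph_def by (auto simp: card_insert_if split: if_splits)

lemma has_cycle_mono:
  assumes "has_cycle V E" "V \<subseteq> V'" "E \<subseteq> E'" shows "has_cycle V' E'"
proof -
  from assms(1) obtain cs where cs: "length cs \<ge> 3" "distinct cs" "set cs \<subseteq> V"
     "\<forall>i. Suc i < length cs \<longrightarrow> {cs ! i, cs ! Suc i} \<in> E" "{last cs, hd cs} \<in> E"
    unfolding has_cycle_def by (elim exE conjE) (rule that)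
  have "set cs \<subseteq> V'" using cs(3) assms(2) by (rule subset_trans)
  moreover have "\<forall>i. Suc i < length cs \<longrightarrow> {cs ! i, cs ! Suc i} \<in> E'" using cs(4) assms(3) by blast
  moreover have "{last cs, hd cs} \<in> E'" using cs(5) assms(3) by blast
  ultimately show ?thesis unfolding has_cycle_def using cs(1,2) by blast
qed

definition gpath :: "'a set set \<Rightarrow> 'a list \<Rightarrow> bool" where
  "gpath F cs \<longleftrightarrow> (\<forall>i. Suc i < length cs \<longrightarrow> {cs ! i, cs ! Suc i} \<in> F)"

lemma leaf_exists:
  assumes tr: "is_tree N F" and ab: "a \<in> N" "b \<in> N" "a \<noteq> b"
  shows "\<exists>l m. l \<in> N \<and> m \<in> N \<and> l \<noteq> m \<and> {l, m} \<in> F \<and> (\<forall>y. {l, y} \<in> F \<longrightarrow> y = m)"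
proof -
  have sg: "simple_graph N F" and con: "connected_graph N F" and nc: "\<not> has_cycle N F"
    using tr unfolding is_tree_def by auto
  have finN: "finite N" using sg unfolding simple_graph_def by auto
  let ?R = "\<lambda>x y. x \<in> N \<and> y \<in> N \<and> {x, y} \<in> F"
  have r: "reach N F a b" using con ab unfolding connected_graph_def by blast
  have "?R\<^sup>*\<^sup>* a b" using r unfolding reach_def by (rule conjunct2[THEN conjunct2])
  from rtranclp_first_step[OF this ab(3)] obtain c where c: "?R a c" by (elim exE)
  have ac: "a \<noteq> c" using c edge_card2[OF sg] by blast
  define Q where "Q = (\<lambda>cs. distinct cs \<and> set cs \<subseteq> N \<and> gpath F cs \<and> length cs \<ge> 2)"
  have Q0: "Q [a, c]" unfolding Q_def gpath_def using c ac
    by (auto simp: less_Suc_eq)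
  have bound: "length cs \<le> card N" if "Q cs" for cs
    using that unfolding Q_def by (metis card_mono distinct_card finN)
  have Pk: "\<exists>cs. Q cs \<and> length cs = 2" using Q0 by (intro exI[of _ "[a, c]"]) simp
  have Pb: "\<forall>y. (\<exists>cs. Q cs \<and> length cs = y) \<longrightarrow> y \<le> card N" using bound by blast
  have "\<exists>x. (\<exists>cs. Q cs \<and> length cs = x) \<and> (\<forall>y. (\<exists>cs. Q cs \<and> length cs = y) \<longrightarrow> y \<le> x)"
    by (rule Nat.ex_has_greatest_nat[where P="\<lambda>n. \<exists>cs. Q cs \<and> length cs = n", OF Pk Pb])
  then obtain L where L: "\<exists>cs. Q cs \<and> length cs = L" "\<forall>n. (\<exists>cs. Q cs \<and> length cs = n) \<longrightarrow> n \<le> L"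
    by blast
  then obtain cs where cs: "Q cs" "length cs = L" by blast
  define n where "n = length cs"
  have n2: "n \<ge> 2" using cs unfolding Q_def n_def by auto
  define l where "l = cs ! (n - 1)"
  define m where "m = cs ! (n - 2)"
  have cne: "cs \<noteq> []" using n2 n_def by auto
  have lastl: "last cs = l" unfolding l_def n_def using cne by (simp add: last_conv_nth)
  have lm: "{m, l} \<in> F" using cs n2 unfolding Q_def gpath_def m_def l_def n_def
    by (metis Suc_diff_Suc diff_Suc_1 diff_less less_2_cases_iff not_less_eq zero_less_diff numeral_2_eq_2
        linorder_not_le lessI order.strict_trans2)
  have lN: "l \<in> N" "m \<in> N" using edge_card2[OF sg lm] by auto
  have lnm: "l \<noteq> m" using edge_card2[OF sg lm] by auto
  have leaf: "y = m" if y: "{l, y} \<in> F" for y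
  proof (rule ccontr)
    assume ym: "y \<noteq> m"
    have yl: "y \<noteq> l" "y \<in> N" using edge_card2[OF sg y] by auto
    show False
    proof (cases "y \<in> set cs")
      case False
      have "Q (cs @ [y])"
        unfolding Q_def gpath_def
      proof (intro conjI allI impI)
        show "distinct (cs @ [y])" using cs False unfolding Q_def by auto
        show "set (cs @ [y]) \<subseteq> N" using cs yl unfolding Q_def by auto
        show "2 \<le> length (cs @ [y])" using n2 n_def by auto
        fix i assume i: "Suc i < length (cs @ [y])"
        show "{(cs @ [y]) ! i, (cs @ [y]) ! Suc i} \<in> F"
        proof (cases "Suc i < length cs")
          case True then show ?thesis using cs unfolding Q_def gpath_def by (auto simp: nth_append)
        next
          case False
          then have "i = n - 1" "Suc i = n" using i n_def by auto
          then show ?thesis using y n_def unfolding l_def by (auto simp: nth_append)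
        qed
      qed
      then show False using L cs by fastforce
    next
      case True
      then obtain j where j: "j < n" "cs ! j = y" unfolding n_def by (metis in_set_conv_nth)
      have "j \<noteq> n - 1" using j yl l_def by auto
      moreover have "j \<noteq> n - 2" using j ym m_def by auto
      ultimately have jn: "j + 3 \<le> n" using j n2 by linarith
      have "has_cycle N F" unfolding has_cycle_def
      proof (intro exI[of _ "drop j cs"] conjI allI impI)
        show "3 \<le> length (drop j cs)" using jn n_def by auto
        show "distinct (drop j cs)" using cs unfolding Q_def by auto
        show "set (drop j cs) \<subseteq> N" using cs unfolding Q_def by (meson set_drop_subset subset_trans)
        fix i assume "Suc i < length (drop j cs)"
        then show "{drop j cs ! i, drop j cs ! Suc i} \<in> F" using cs unfolding Q_def gpath_def
          by auto
      next
        have "last (drop j cs) = l" using lastl jn n_def by auto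
        moreover have "hd (drop j cs) = y" using j n_def by (simp add: hd_drop_conv_nth)
        ultimately show "{last (drop j cs), hd (drop j cs)} \<in> F" using y by simp
      qed
      then show False using nc by simp
    qed
  qed
  show ?thesis using lN lnm lm leaf by (metis insert_commute)
qed


lemma reach_remove_leaf:
  assumes r: "reach C E u w" and ul: "u \<noteq> l" and wl: "w \<noteq> l"
    and leaf: "\<forall>y. {l, y} \<in> E \<longrightarrow> y = m"
    and sub: "\<forall>x\<in>C-{l}. \<forall>y\<in>C-{l}. {x, y} \<in> E \<longrightarrow> {x, y} \<in> E'"
  shows "reach (C - {l}) E' u w"
proof -
  let ?R = "\<lambda>x y. x \<in> C \<and> y \<in> C \<and> {x, y} \<in> E"
  let ?R' = "\<lambda>x y. x \<in> C - {l} \<and> y \<in> C - {l} \<and> {x, y} \<in> E'"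
  have "?R\<^sup>*\<^sup>* u w" using r unfolding reach_def by blast
  then have "(w \<noteq> l \<longrightarrow> ?R'\<^sup>*\<^sup>* u w) \<and> (w = l \<longrightarrow> ?R'\<^sup>*\<^sup>* u m)"
  proof (induction rule: rtranclp_induct)
    case base then show ?case using ul by simp
  next
    case (step y z)
    show ?case
    proof (cases "z = l")
      case True
      then show ?thesis
      proof (cases "y = l")
        case True then show ?thesis using step \<open>z = l\<close> by simp
      next
        case False
        have "{l, y} \<in> E" using step(2) \<open>z = l\<close> by (simp add: insert_commute)
        then have "y = m" using leaf by blast
        then show ?thesis using step False \<open>z = l\<close> by simp
      qed
    next
      case zl: False
      then show ?thesis
      proof (cases "y = l")
        case True
        have "z = m" using step(2) True leaf by blast
        then show ?thesis using step True zl by simp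
      next
        case yl: False
        have Rz: "?R' y z" using step(2) yl zl sub by blast
        have Ry: "?R'\<^sup>*\<^sup>* u y" using step(3) yl by simp
        show ?thesis using rtranclp.rtrancl_into_rtrancl[OF Ry Rz] zl by simp
      qed
    qed
  qed
  then show ?thesis using wl r ul unfolding reach_def by auto
qed

lemma clique_in_bag:
  assumes "finite N" "is_tree N F"
    "\<forall>v\<in>K. connected_graph {t\<in>N. v \<in> B t} {f\<in>F. f \<subseteq> {t\<in>N. v \<in> B t}}"
    "\<forall>u\<in>K. \<forall>w\<in>K. u \<noteq> w \<longrightarrow> (\<exists>t\<in>N. u \<in> B t \<and> w \<in> B t)"
  shows "\<exists>t\<in>N. K \<subseteq> B t"
  using assms
proof (induction "card N" arbitrary: N F rule: less_induct)
  case less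
  have sg: "simple_graph N F" and con: "connected_graph N F" and nc: "\<not> has_cycle N F"
    using less.prems unfolding is_tree_def by auto
  have Tne: "\<exists>t\<in>N. v \<in> B t" if "v \<in> K" for v
    using less.prems(3) that unfolding connected_graph_def by auto
  show ?case
  proof (cases "\<exists>a b. a \<in> N \<and> b \<in> N \<and> a \<noteq> b")
    case False
    obtain t where t: "t \<in> N" using con unfolding connected_graph_def by auto
    then have "N = {t}" using False by auto
    then show ?thesis using Tne by auto
  next
    case True
    then obtain l m where lm: "l \<in> N" "m \<in> N" "l \<noteq> m" "{l, m} \<in> F"
      and leafm: "\<forall>y. {l, y} \<in> F \<longrightarrow> y = m"
      using leaf_exists[OF less.prems(2)] by blast
    show ?thesis
    proof (cases "\<exists>u\<in>K. u \<in> B l \<and> u \<notin> B m")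
      case True
      then obtain u where u: "u \<in> K" "u \<in> B l" "u \<notin> B m" by blast
      let ?T = "{t\<in>N. u \<in> B t}"
      have Tu: "t = l" if "t \<in> N" "u \<in> B t" for t
      proof (rule ccontr)
        assume tl: "t \<noteq> l"
        have "reach ?T {f\<in>F. f \<subseteq> ?T} l t"
          using less.prems(3) u that lm unfolding connected_graph_def by blast
        then have "(\<lambda>x y. x \<in> ?T \<and> y \<in> ?T \<and> {x, y} \<in> {f\<in>F. f \<subseteq> ?T})\<^sup>*\<^sup>* l t"
          unfolding reach_def by blast
        from rtranclp_first_step[OF this tl[symmetric]] obtain c where
          "c \<in> ?T" "{l, c} \<in> F" by auto
        then have "c = m" using leafm by blast
        then show False using \<open>c \<in> ?T\<close> u by simp
      qed
      have "K \<subseteq> B l"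
      proof
        fix w assume w: "w \<in> K"
        show "w \<in> B l"
        proof (cases "w = u")
          case True then show ?thesis using u by simp
        next
          case False
          then obtain t where "t \<in> N" "u \<in> B t" "w \<in> B t" using less.prems(4) u w by blast
          then show ?thesis using Tu by blast
        qed
      qed
      then show ?thesis using lm by blast
    next
      case False
      define N' where "N' = N - {l}"
      define F' where "F' = {f\<in>F. l \<notin> f}"
      have card: "card N' < card N" unfolding N'_def by (rule card_Diff1_less[OF less.prems(1) lm(1)])
      have fin: "finite N'" unfolding N'_def using less.prems(1) by simp
      have sg': "simple_graph N' F'" using sg unfolding simple_graph_def N'_def F'_def by auto
      have con': "connected_graph N' F'" unfolding connected_graph_def
      proof (intro conjI ballI)
        show "N' \<noteq> {}" using lm unfolding N'_def by auto
        fix u w assume uw: "u \<in> N'" "w \<in> N'"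
        have r: "reach N F u w" using con uw unfolding connected_graph_def N'_def by blast
        have sub: "\<forall>x\<in>N-{l}. \<forall>y\<in>N-{l}. {x,y} \<in> F \<longrightarrow> {x,y} \<in> F'" unfolding F'_def by auto
        have "u \<noteq> l" "w \<noteq> l" using uw unfolding N'_def by auto
        from reach_remove_leaf[OF r this leafm sub] show "reach N' F' u w" unfolding N'_def .
      qed
      have nc': "\<not> has_cycle N' F'"
      proof
        assume "has_cycle N' F'"
        then have "has_cycle N F" by (rule has_cycle_mono) (auto simp: N'_def F'_def)
        then show False using nc by simp
      qed
      have tr': "is_tree N' F'" using sg' con' nc' unfolding is_tree_def by auto
      have conv: "connected_graph {t\<in>N'. v \<in> B t} {f\<in>F'. f \<subseteq> {t\<in>N'. v \<in> B t}}" if v: "v \<in> K" for v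
      proof -
        let ?T = "{t\<in>N. v \<in> B t}"
        have eqT: "{t\<in>N'. v \<in> B t} = ?T - {l}" unfolding N'_def by auto
        have cT: "connected_graph ?T {f\<in>F. f \<subseteq> ?T}" using less.prems(3) v by blast
        show ?thesis unfolding connected_graph_def eqT
        proof (intro conjI ballI)
          show "?T - {l} \<noteq> {}"
          proof
            assume e: "?T - {l} = {}"
            obtain t where "t \<in> ?T" using cT unfolding connected_graph_def by auto
            then have "v \<in> B l" using e by auto
            then have "v \<in> B m" using False v by blast
            then show False using e lm by auto
          qed
          fix x y assume xy: "x \<in> ?T - {l}" "y \<in> ?T - {l}"
          have r: "reach ?T {f\<in>F. f \<subseteq> ?T} x y" using cT xy unfolding connected_graph_def by blast
          have sub: "\<forall>a\<in>?T-{l}. \<forall>b\<in>?T-{l}. {a,b} \<in> {f\<in>F. f \<subseteq> ?T} \<longrightarrow> {a,b} \<in> {f \<in> F'. f \<subseteq> ?T - {l}}"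
            unfolding F'_def by auto
          have lf: "\<forall>y. {l, y} \<in> {f\<in>F. f \<subseteq> ?T} \<longrightarrow> y = m" using leafm by blast
          have "x \<noteq> l" "y \<noteq> l" using xy by auto
          from reach_remove_leaf[OF r this lf sub] show "reach (?T - {l}) {f \<in> F'. f \<subseteq> ?T - {l}} x y" .
        qed
      qed
      have pairs: "\<forall>u\<in>K. \<forall>w\<in>K. u \<noteq> w \<longrightarrow> (\<exists>t\<in>N'. u \<in> B t \<and> w \<in> B t)"
      proof (intro ballI impI)
        fix u w assume uw: "u \<in> K" "w \<in> K" "u \<noteq> w"
        then obtain t where t: "t \<in> N" "u \<in> B t" "w \<in> B t" using less.prems(4) by blast
        show "\<exists>t\<in>N'. u \<in> B t \<and> w \<in> B t"
        proof (cases "t = l")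
          case True
          then have "u \<in> B m" "w \<in> B m" using False t uw by auto
          then show ?thesis using lm unfolding N'_def by auto
        next
          case False then show ?thesis using t unfolding N'_def by auto
        qed
      qed
      obtain t where "t \<in> N'" "K \<subseteq> B t" using less.hyps[OF card fin tr' _ pairs] conv by blast
      then show ?thesis unfolding N'_def by auto
    qed
  qed
qed


definition Mk :: "nat \<Rightarrow> nat" where "Mk k = 3*k*k*k + 1"
definition Vg :: "nat \<Rightarrow> nat set" where "Vg k = {0..<k + Mk k}"
definition Eg :: "nat \<Rightarrow> nat set set" where
  "Eg k = {{a, b} | a b. a < k \<and> a < b \<and> b < k + Mk k}"
definition Xg :: "nat \<Rightarrow> nat set" where "Xg k = {k..<k + Mk k}"

lemma sg_Eg: "simple_graph (Vg k) (Eg k)"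
  unfolding simple_graph_def Vg_def Eg_def by auto

lemma edge_Eg_intro: "a < k \<Longrightarrow> a < b \<Longrightarrow> b < k + Mk k \<Longrightarrow> {a, b} \<in> Eg k"
  unfolding Eg_def by blast

lemma edge_in_Eg: assumes "a < k" "z \<in> Xg k" shows "{a, z} \<in> Eg k"
proof -
  have "a < z" "z < k + Mk k" using assms unfolding Xg_def by auto
  then show ?thesis unfolding Eg_def using assms(1) by blast
qed

lemma star_tree:
  assumes "c \<in> X" "finite X"
  shows "is_tree X {{c, t} | t. t \<in> X \<and> t \<noteq> c}"
proof -
  let ?F = "{{c, t} | t. t \<in> X \<and> t \<noteq> c}"
  have sg: "simple_graph X ?F" unfolding simple_graph_def
  proof (intro conjI ballI)
    show "finite X" by (rule assms(2))
  next
    fix e assume "e \<in> ?F"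
    then obtain t where t: "e = {c, t}" "t \<in> X" "t \<noteq> c" by blast
    show "e \<subseteq> X" using t assms(1) by simp
    show "card e = 2" using t by simp
  qed
  have rc: "reach X ?F u c" if "u \<in> X" for u
  proof (cases "u = c")
    case True then show ?thesis using reach_refl[OF that] by simp
  next
    case False
    have "{u, c} \<in> ?F" using that False by (auto simp: insert_commute)
    then show ?thesis by (rule reach_edge[OF that assms(1)])
  qed
  have con: "connected_graph X ?F" unfolding connected_graph_def
  proof (intro conjI ballI)
    show "X \<noteq> {}" using assms(1) by blast
    fix u w assume "u \<in> X" "w \<in> X"
    then show "reach X ?F u w" using reach_trans[OF rc reach_sym[OF rc]] by blast
  qed
  have nc: "\<not> has_cycle X ?F"
  proof
    assume "has_cycle X ?F"
    then obtain cs where cs: "length cs \<ge> 3" "distinct cs"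
      "\<forall>i. Suc i < length cs \<longrightarrow> {cs ! i, cs ! Suc i} \<in> ?F" "{last cs, hd cs} \<in> ?F"
      unfolding has_cycle_def by (elim exE conjE) (rule that)
    define F where "F = ?F"
    have memF: "c \<in> f" if "f \<in> F" for f using that unfolding F_def by blast
    have cs3: "\<forall>i. Suc i < length cs \<longrightarrow> {cs ! i, cs ! Suc i} \<in> F" using cs(3) unfolding F_def .
    have cs4: "{last cs, hd cs} \<in> F" using cs(4) unfolding F_def .
    have "{cs ! 0, cs ! Suc 0} \<in> F" using cs3 cs(1) by simp
    note h01 = this
    have e01: "c \<in> {cs ! 0, cs ! 1}" using memF[OF h01] by simp
    have "{cs ! 1, cs ! Suc 1} \<in> F" using cs3 cs(1) by simp
    note h12 = this
    have e12: "c \<in> {cs ! 1, cs ! 2}" using memF[OF h12] by (simp add: numeral_2_eq_2)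
    have ne: "cs \<noteq> []" using cs(1) by auto
    have "last cs = cs ! (length cs - 1)" "hd cs = cs ! 0" using ne
      by (simp_all add: last_conv_nth hd_conv_nth)
    then have el: "c \<in> {cs ! (length cs - 1), cs ! 0}" using memF[OF cs4] by simp
    have d: "cs ! i \<noteq> cs ! j" if "i < length cs" "j < length cs" "i \<noteq> j" for i j
      using cs(2) that nth_eq_iff_index_eq by blast
    show False
    proof (cases "cs ! 1 = c")
      case True
      have "cs ! 1 \<noteq> cs ! 0" by (rule d) (use cs(1) in auto)
      moreover have "cs ! 1 \<noteq> cs ! (length cs - 1)" by (rule d) (use cs(1) in auto)
      ultimately show ?thesis using el True by auto
    next
      case False
      have "cs ! 0 \<noteq> cs ! 2" by (rule d) (use cs(1) in auto)
      then show ?thesis using e01 e12 False by auto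
    qed
  qed
  show ?thesis unfolding is_tree_def using sg con nc by auto
qed

lemma tw_upper:
  assumes "k \<ge> 1"
  shows "\<exists>N F B. tree_decomposition (Vg k) (Eg k) N F B \<and> (\<forall>t\<in>N. card (B t) \<le> k + 1)"
proof -
  let ?X = "Xg k"
  let ?F = "{{k, t} | t. t \<in> ?X \<and> t \<noteq> k}"
  let ?B = "\<lambda>t. {0..<k} \<union> {t}"
  have kX: "k \<in> ?X" unfolding Xg_def Mk_def by auto
  have finX: "finite ?X" unfolding Xg_def by simp
  have tr: "is_tree ?X ?F" by (rule star_tree[OF kX finX])
  have "tree_decomposition (Vg k) (Eg k) ?X ?F ?B"
    unfolding tree_decomposition_def
  proof (intro conjI ballI)
    show "is_tree ?X ?F" by (rule tr)
    show "(\<Union>t\<in>?X. ?B t) = Vg k"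
    proof
      show "(\<Union>t\<in>?X. ?B t) \<subseteq> Vg k" unfolding Xg_def Vg_def by auto
      show "Vg k \<subseteq> (\<Union>t\<in>?X. ?B t)"
      proof
        fix x assume x: "x \<in> Vg k"
        show "x \<in> (\<Union>t\<in>?X. ?B t)"
        proof (cases "x < k")
          case True
          then have "x \<in> ?B k" by simp
          then show ?thesis by (rule UN_I[OF kX])
        next
          case False
          then have xX: "x \<in> ?X" using x unfolding Xg_def Vg_def by auto
          have "x \<in> ?B x" by simp
          then show ?thesis by (rule UN_I[OF xX])
        qed
      qed
    qed
    fix e assume "e \<in> Eg k"
    then obtain a b where ab: "e = {a, b}" "a < k" "a < b" "b < k + Mk k" unfolding Eg_def by blast
    show "\<exists>t\<in>?X. e \<subseteq> ?B t"
    proof (cases "b < k")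
      case True then show ?thesis using ab kX by auto
    next
      case False then show ?thesis using ab unfolding Xg_def by (intro bexI[of _ b]) auto
    qed
  next
    fix v assume v: "v \<in> Vg k"
    show "connected_graph {t\<in>?X. v \<in> ?B t} {f\<in>?F. f \<subseteq> {t\<in>?X. v \<in> ?B t}}"
    proof (cases "v < k")
      case True
      then have "{t\<in>?X. v \<in> ?B t} = ?X" by auto
      moreover have "{f\<in>?F. f \<subseteq> ?X} = ?F" using kX by auto
      ultimately show ?thesis using tr unfolding is_tree_def by simp
    next
      case False
      then have eq: "{t\<in>?X. v \<in> ?B t} = {v}" using v unfolding Xg_def Vg_def by auto
      show ?thesis unfolding eq connected_graph_def using reach_refl[of v "{v}"] by auto
    qed
  qed
  moreover have "\<forall>t\<in>?X. card (?B t) \<le> k + 1"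
    by (simp add: card_insert_if)
  ultimately show ?thesis by blast
qed

lemma tw_lower:
  assumes "k \<ge> 1" "tree_decomposition (Vg k) (Eg k) N F B" "\<forall>t\<in>N. card (B t) \<le> w + 1"
  shows "k \<le> w"
proof -
  let ?K = "insert k {0..<k}"
  have tr: "is_tree N F" using assms(2) unfolding tree_decomposition_def by auto
  then have finN: "finite N" unfolding is_tree_def simple_graph_def by auto
  have KV: "?K \<subseteq> Vg k" unfolding Vg_def Mk_def by auto
  have c1: "\<forall>v\<in>?K. connected_graph {t\<in>N. v \<in> B t} {f\<in>F. f \<subseteq> {t\<in>N. v \<in> B t}}"
    using assms(2) KV unfolding tree_decomposition_def by blast
  have c2: "\<forall>u\<in>?K. \<forall>w\<in>?K. u \<noteq> w \<longrightarrow> (\<exists>t\<in>N. u \<in> B t \<and> w \<in> B t)"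
  proof (intro ballI impI)
    fix u w assume uw: "u \<in> ?K" "w \<in> ?K" "u \<noteq> w"
    have "{u, w} \<in> Eg k"
    proof (cases "u < w")
      case True
      have "u < k" "w < k + Mk k" using uw True unfolding Mk_def by auto
      then show ?thesis using edge_Eg_intro True by blast
    next
      case False
      then have wu: "w < u" using uw by auto
      have "w < k" "u < k + Mk k" using uw wu unfolding Mk_def by auto
      then have "{w, u} \<in> Eg k" using edge_Eg_intro wu by blast
      then show ?thesis by (simp add: insert_commute)
    qed
    moreover have cov: "\<forall>e\<in>Eg k. \<exists>t\<in>N. e \<subseteq> B t"
      using assms(2) unfolding tree_decomposition_def by (elim conjE) assumption
    ultimately obtain t where "t \<in> N" "{u, w} \<subseteq> B t" by blast
    then show "\<exists>t\<in>N. u \<in> B t \<and> w \<in> B t" by blast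
  qed
  from clique_in_bag[OF finN tr c1 c2] obtain t where t: "t \<in> N" "?K \<subseteq> B t" ..
  have "B t \<subseteq> Vg k" using assms(2) t(1) unfolding tree_decomposition_def by blast
  then have "finite (B t)" unfolding Vg_def using finite_subset by blast
  then have "card ?K \<le> card (B t)" using t(2) card_mono by blast
  moreover have "card ?K = k + 1" by simp
  ultimately show ?thesis using assms(3) t(1) by fastforce
qed

lemma tw_eq: "k \<ge> 1 \<Longrightarrow> treewidth (Vg k) (Eg k) = k"
  unfolding treewidth_def
  by (rule Least_equality) (use tw_upper tw_lower in blast)+


definition good :: "nat \<Rightarrow> nat list \<Rightarrow> (nat set \<Rightarrow> nat) \<Rightarrow> nat \<Rightarrow> nat \<times> nat \<times> nat \<Rightarrow> bool" where
  "good k vs p x z \<longleftrightarrow> (case z of (a, b, r) \<Rightarrow> a < k \<and> b < k \<and> prec vs a b \<and> p {a, x} = p {b, x} \<and>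
     r < 3 \<and> (r = 0 \<longrightarrow> prec vs x a) \<and> (r = 1 \<longrightarrow> prec vs a x \<and> prec vs x b) \<and> (r = 2 \<longrightarrow> prec vs b x))"

lemma local_lower:
  assumes k1: "k \<ge> 1" and be: "book_embedding (Vg k) (Eg k) vs p" and kl: "k_local j (Vg k) (Eg k) p"
  shows "k \<le> j"
proof (rule ccontr)
  assume jk: "\<not> k \<le> j"
  have dvs: "distinct vs" and svs: "set vs = Vg k" using be unfolding book_embedding_def linear_embedding_def by auto
  have finE: "finite (Eg k)" using sg_Eg[of k] unfolding simple_graph_def
    by (meson Pow_iff finite_Pow_iff rev_finite_subset subsetI)
  have XV: "Xg k \<subseteq> Vg k" unfolding Xg_def Vg_def by auto
  have SV: "a < k \<Longrightarrow> a \<in> Vg k" for a unfolding Vg_def by auto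
  have exgood: "\<exists>z. good k vs p x z" if x: "x \<in> Xg k" for x
  proof -
    let ?Ex = "(\<lambda>s. {s, x}) ` {0..<k}"
    have xk: "x \<ge> k" using x unfolding Xg_def by auto
    have inj: "inj_on (\<lambda>s. {s, x}) {0..<k}" using xk unfolding inj_on_def by (auto simp: doubleton_eq_iff)
    have cEx: "card ?Ex = k" using card_image[OF inj] by simp
    have "?Ex \<subseteq> {e\<in>Eg k. x \<in> e}" using edge_in_Eg x by auto
    then have "p ` ?Ex \<subseteq> pages_at (Eg k) p x" unfolding pages_at_def by auto
    moreover have "finite (pages_at (Eg k) p x)" unfolding pages_at_def using finE by auto
    ultimately have "card (p ` ?Ex) \<le> card (pages_at (Eg k) p x)" by (rule card_mono[rotated])
    also have "\<dots> \<le> j" using kl x XV unfolding k_local_def by auto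
    finally have "card (p ` ?Ex) < card ?Ex" using jk cEx by simp
    then have "\<not> inj_on p ?Ex" using pigeonhole by blast
    then obtain e1 e2 where ee: "e1 \<in> ?Ex" "e2 \<in> ?Ex" "p e1 = p e2" "e1 \<noteq> e2"
      unfolding inj_on_def by blast
    from ee(1) obtain s1 where s1: "s1 \<in> {0..<k}" "e1 = {s1, x}" by (rule imageE) simp
    from ee(2) obtain s2 where s2: "s2 \<in> {0..<k}" "e2 = {s2, x}" by (rule imageE) simp
    have s12: "e1 = {s1, x}" "e2 = {s2, x}" "s1 < k" "s2 < k" using s1 s2 by auto
    have s: "s1 < k" "s2 < k" "p {s1, x} = p {s2, x}" using s12 ee by auto
    have "s1 \<noteq> s2" using s12 ee by auto
    then have "prec vs s1 s2 \<or> prec vs s2 s1" using prec_total s svs SV by metis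
    then obtain a b where ab: "a < k" "b < k" "prec vs a b" "p {a, x} = p {b, x}" using s by metis
    have xa: "x \<noteq> a" "x \<noteq> b" using xk ab by auto
    have xin: "x \<in> set vs" using x XV svs by auto
    have ain: "a \<in> set vs" "b \<in> set vs" using ab SV svs by auto
    show ?thesis
    proof (cases "prec vs x a")
      case True then show ?thesis using ab unfolding good_def by (intro exI[of _ "(a, b, 0)"]) auto
    next
      case na: False
      then have ax: "prec vs a x" using prec_total xin ain xa by metis
      show ?thesis
      proof (cases "prec vs x b")
        case True then show ?thesis using ab ax unfolding good_def by (intro exI[of _ "(a, b, 1)"]) auto
      next
        case False
        then have "prec vs b x" using prec_total xin ain xa by metis
        then show ?thesis using ab unfolding good_def by (intro exI[of _ "(a, b, 2)"]) auto
      qed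
    qed
  qed
  define \<phi> where "\<phi> = (\<lambda>x. SOME z. good k vs p x z)"
  have phig: "good k vs p x (\<phi> x)" if "x \<in> Xg k" for x
    unfolding \<phi>_def using exgood[OF that] by (rule someI_ex)
  define Bs where "Bs = {0..<k} \<times> {0..<k} \<times> {0..<(3::nat)}"
  have phiB: "\<phi> \<in> Xg k \<rightarrow> Bs"
  proof
    fix x assume "x \<in> Xg k"
    then have "good k vs p x (\<phi> x)" by (rule phig)
    then show "\<phi> x \<in> Bs" unfolding good_def Bs_def by (auto split: prod.splits)
  qed
  have cB: "card Bs = k * k * 3" unfolding Bs_def by (simp add: card_cartesian_product)
  have Bne: "Bs \<noteq> {}" using k1 unfolding Bs_def by auto
  obtain y where y: "y \<in> Bs" "card (\<phi> -` {y} \<inter> Xg k) * card Bs \<ge> card (Xg k)"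
    using pigeonhole_card[OF phiB _ _ Bne] unfolding Xg_def Bs_def by auto
  define Y where "Y = \<phi> -` {y} \<inter> Xg k"
  have cX: "card (Xg k) = 3*k*k*k + 1" unfolding Xg_def Mk_def by simp
  have ge: "card Y * (k * k * 3) \<ge> 3*k*k*k + 1" using y(2) cB cX unfolding Y_def by simp
  have eq: "k * (k * k * 3) = 3*k*k*k" by (simp add: algebra_simps)
  have "card Y * (k * k * 3) > k * (k * k * 3)" using ge eq by linarith
  then have cY: "card Y > k" using mult_less_cancel2 by blast
  obtain a b r where yabr: "y = (a, b, r)" by (metis prod_cases3)
  have gY: "good k vs p z (a, b, r)" if "z \<in> Y" for z
  proof -
    have zX: "z \<in> Xg k" and pz: "\<phi> z = y" using that unfolding Y_def by auto
    show ?thesis using phig[OF zX] pz yabr by simp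
  qed
  have ak: "a < k" using y(1) yabr unfolding Bs_def by auto
  have YX: "Y \<subseteq> Xg k" unfolding Y_def by auto
  have neq: "p {a, z1} \<noteq> p {a, z2}" if z: "z1 \<in> Y" "z2 \<in> Y" "prec vs z1 z2" for z1 z2
  proof -
    have g1: "good k vs p z1 (a, b, r)" and g2: "good k vs p z2 (a, b, r)" using gY z by auto
    have E1: "{a, z1} \<in> Eg k" "{b, z1} \<in> Eg k" "{a, z2} \<in> Eg k" "{b, z2} \<in> Eg k"
      using edge_in_Eg z YX g1 unfolding good_def by auto
    have pb: "p {b, z1} = p {a, z1}" "p {b, z2} = p {a, z2}" using g1 g2 unfolding good_def by auto
    have ab: "prec vs a b" using g1 unfolding good_def by auto
    have noc: "\<not> crosses vs e f" if "e \<in> Eg k" "f \<in> Eg k" "p e = p f" for e f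
      using be that unfolding book_embedding_def by blast
    have r3: "r < 3" using g1 unfolding good_def by auto
    show ?thesis
    proof (cases "r = 0")
      case True
      then have "prec vs z2 a" using g2 unfolding good_def by auto
      then have "crosses vs {z1, a} {z2, b}" using cross_intro[OF dvs z(3) _ ab] by blast
      then show ?thesis using noc E1 pb by (metis insert_commute)
    next
      case n0: False
      show ?thesis
      proof (cases "r = 1")
        case True
        then have "prec vs a z1" "prec vs z2 b" using g1 g2 unfolding good_def by auto
        then have "crosses vs {a, z2} {z1, b}" using cross_intro[OF dvs _ z(3)] by blast
        then show ?thesis using noc E1 pb by (metis insert_commute)
      next
        case False
        then have "r = 2" using n0 r3 by auto
        then have "prec vs b z1" using g1 unfolding good_def by auto
        then have "crosses vs {a, z1} {b, z2}" using cross_intro[OF dvs ab _ z(3)] by blast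
        then show ?thesis using noc E1 pb by (metis insert_commute)
      qed
    qed
  qed
  have inj: "inj_on (\<lambda>z. p {a, z}) Y"
  proof (rule inj_onI, rule ccontr)
    fix z1 z2 assume z: "z1 \<in> Y" "z2 \<in> Y" "p {a, z1} = p {a, z2}" "z1 \<noteq> z2"
    have "z1 \<in> set vs" "z2 \<in> set vs" using z YX XV svs by auto
    then have "prec vs z1 z2 \<or> prec vs z2 z1" using prec_total z(4) by metis
    then show False using neq z by metis
  qed
  have "(\<lambda>z. p {a, z}) ` Y \<subseteq> pages_at (Eg k) p a"
    unfolding pages_at_def using edge_in_Eg[OF ak] YX by auto
  moreover have "finite (pages_at (Eg k) p a)" unfolding pages_at_def using finE by auto
  ultimately have "card ((\<lambda>z. p {a, z}) ` Y) \<le> card (pages_at (Eg k) p a)" by (rule card_mono[rotated])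
  also have "\<dots> \<le> j" using kl SV[OF ak] unfolding k_local_def by auto
  finally have "card Y \<le> j" using card_image[OF inj] by simp
  then show False using cY jk by simp
qed

lemma exists_union:
  "\<exists>vs p. union_embedding (Vg k) (Eg k) vs p"
proof -
  have finE: "finite (Eg k)" using sg_Eg[of k] unfolding simple_graph_def
    by (meson Pow_iff finite_Pow_iff rev_finite_subset subsetI)
  obtain h where h: "bij_betw h (Eg k) {0..<card (Eg k)}" using ex_bij_betw_finite_nat[OF finE] by blast
  define vs where "vs = sorted_list_of_set (Vg k)"
  have vs: "distinct vs" "set vs = Vg k" unfolding vs_def Vg_def by auto
  have "union_embedding (Vg k) (Eg k) vs h"
    unfolding union_embedding_def linear_embedding_def
  proof (intro conjI allI impI vs)
    fix i e f assume "same_component (Eg k) h i e f"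
    then have "h e = h f" "e \<in> Eg k" "f \<in> Eg k" using sc_page by metis+
    then have "e = f" using h unfolding bij_betw_def inj_on_def by blast
    then show "\<not> crosses vs e f" using not_cross_self[OF vs(1)] by simp
  qed
  then show ?thesis by blast
qed

theorem theorem3:
  fixes k :: nat
  assumes "k \<ge> 1"
  shows "\<exists>(V :: nat set) (E :: nat set set).
           simple_graph V E \<and> treewidth V E = k \<and>
           union_page_number V E \<ge> local_page_number V E \<and>
           local_page_number V E \<ge> k"
proof (intro exI conjI)
  show "simple_graph (Vg k) (Eg k)" by (rule sg_Eg)
  show "treewidth (Vg k) (Eg k) = k" using tw_eq assms by blast
  obtain vs0 p0 where "union_embedding (Vg k) (Eg k) vs0 p0" using exists_union[of k] by blast
  then have ex2: "\<exists>m vs p. union_embedding (Vg k) (Eg k) vs p \<and> num_pages (Eg k) p = m" by blast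
  have "\<exists>vs p. union_embedding (Vg k) (Eg k) vs p \<and> num_pages (Eg k) p = union_page_number (Vg k) (Eg k)"
    unfolding union_page_number_def by (rule LeastI_ex[OF ex2])
  then obtain vs p where u: "union_embedding (Vg k) (Eg k) vs p" "num_pages (Eg k) p = union_page_number (Vg k) (Eg k)"
    by blast
  obtain p' where p': "book_embedding (Vg k) (Eg k) vs p'" "k_local (union_page_number (Vg k) (Eg k)) (Vg k) (Eg k) p'"
    using union_to_local[OF sg_Eg u(1)] u(2) by metis
  show "local_page_number (Vg k) (Eg k) \<le> union_page_number (Vg k) (Eg k)"
    unfolding local_page_number_def using p' by (blast intro: Least_le)
  have ex3: "\<exists>j vs p. book_embedding (Vg k) (Eg k) vs p \<and> k_local j (Vg k) (Eg k) p" using p' by blast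
  have "\<exists>vs p. book_embedding (Vg k) (Eg k) vs p \<and> k_local (local_page_number (Vg k) (Eg k)) (Vg k) (Eg k) p"
    unfolding local_page_number_def by (rule LeastI_ex[OF ex3])
  then show "k \<le> local_page_number (Vg k) (Eg k)" using local_lower assms by blast
qed

end
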